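(* Let $S_\omega$ and $S_{\omega'}$ be standard graded skew polynomial algebras in $n$ variables at cube roots of unity. Then the following are equivalent: (i) the point simplicial complexes $\Delta_\omega$ and $\Delta_{\omega'}$ are isomorphic; (ii) there exists a permutation $\sigma\in\mathfrak{S}_n$ such that, for every $v\in[n]$, $\sigma$ is an isomorphism from the underlying graph of $I_v(M_\omega)$ to the underlying graph of $I_{\sigma(v)}(M_{\omega'})$.
   Context: Let $k$ be an algebraically closed field of characteristic $0$; fix a primitive cube root of unity $\zeta_3$. For $\omega=(\omega_{ij})$ with $\omega_{ii}=1$, $\omega_{ij}\omega_{ji}=1$, all cube roots of unity, $S_\omega=k\langle x_1,\dots,x_n\rangle/(x_ix_j-\omega_{ij}x_jx_i)$ with $\deg x_i=1$; its E-matrix is $M_\omega=(m_{ij})$ over $\mathbb{Z}/3\mathbb{Z}$ with $\omega_{ij}=\zeta_3^{m_{ij}}$ (viewed as a digraph on $[n]$ with an edge $i\to j$ iff $m_{ij}=1$). The point simplicial complex $\Delta_\omega$ has vertex set $[n]$ and faces the $F\subset[n]$ with $\omega_{ij}\omega_{jh}\omega_{hi}=1$ for all distinct $i,j,h\in F$; isomorphism of simplicial complexes means a bijection of vertex sets inducing a bijection of facets. For $v\in[n]$ let $X_v$ be the matrix with $(X_v)_{iv}=1$, $(X_v)_{vi}=-1$ for $i\ne v$ and other entries $0$. The isolation $I_v(M)$ of a skew-symmetric $M$ over $\mathbb{Z}/3\mathbb{Z}$ at $v$ is the unique matrix of the form $M+\sum_{u=1}^n a_uX_u$ ($a_u\in\mathbb{Z}/3\mathbb{Z}$)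 whose $v$-th row and column are zero (i.e., $v$ is an isolated vertex). The underlying graph of a skew-symmetric $N=(n_{ij})$ is the simple undirected graph on $[n]$ with $i,j$ adjacent iff $n_{ij}\ne0$. *)

theory Defs
  imports "HOL-Computational_Algebra.Polynomial"
begin

text \<open>Index set [n] = {1..n}.  Matrices are functions nat => nat => _, only
  entries indexed by [n] matter (entries outside are set to 0 where we construct them).\<close>

definition alg_closed_field :: "'k::field itself \<Rightarrow> bool" where
  "alg_closed_field _ \<longleftrightarrow> (\<forall>p :: 'k poly. degree p > 0 \<longrightarrow> (\<exists>x. poly p x = 0))"

definition primitive_cube_root :: "'k::field \<Rightarrow> bool" where
  "primitive_cube_root z \<longleftrightarrow> z ^ 3 = 1 \<and> z \<noteq> 1"

definition cube_root_param :: "nat \<Rightarrow> (nat \<Rightarrow> nat \<Rightarrow> 'k::field) \<Rightarrow> bool" where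
  "cube_root_param n \<omega> \<longleftrightarrow>
     (\<forall>i\<in>{1..n}. \<omega> i i = 1) \<and>
     (\<forall>i\<in>{1..n}. \<forall>j\<in>{1..n}. \<omega> i j * \<omega> j i = 1 \<and> (\<omega> i j) ^ 3 = 1)"

text \<open>E-matrix over Z/3Z, entries represented by the residues {0,1,2} :: int.\<close>
definition E_matrix :: "nat \<Rightarrow> 'k::field \<Rightarrow> (nat \<Rightarrow> nat \<Rightarrow> 'k) \<Rightarrow> nat \<Rightarrow> nat \<Rightarrow> int" where
  "E_matrix n \<zeta> \<omega> i j =
     (if i \<in> {1..n} \<and> j \<in> {1..n}
      then (THE m::int. m \<in> {0,1,2} \<and> \<omega> i j = \<zeta> ^ nat m) else 0)"

definition point_faces :: "nat \<Rightarrow> (nat \<Rightarrow> nat \<Rightarrow> 'k::field) \<Rightarrow> nat set set" where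
  "point_faces n \<omega> = {F. F \<subseteq> {1..n} \<and>
     (\<forall>i\<in>F. \<forall>j\<in>F. \<forall>h\<in>F. i \<noteq> j \<and> j \<noteq> h \<and> i \<noteq> h \<longrightarrow> \<omega> i j * \<omega> j h * \<omega> h i = 1)}"

definition facets :: "nat set set \<Rightarrow> nat set set" where
  "facets \<Delta> = {F \<in> \<Delta>. \<forall>G\<in>\<Delta>. F \<subseteq> G \<longrightarrow> G = F}"

definition simplicial_iso :: "nat \<Rightarrow> nat set set \<Rightarrow> nat set set \<Rightarrow> bool" where
  "simplicial_iso n \<Delta> \<Delta>' \<longleftrightarrow>
     (\<exists>\<sigma>. bij_betw \<sigma> {1..n} {1..n} \<and> bij_betw (\<lambda>F. \<sigma> ` F) (facets \<Delta>) (facets \<Delta>'))"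

definition X_mat :: "nat \<Rightarrow> nat \<Rightarrow> nat \<Rightarrow> nat \<Rightarrow> int" where
  "X_mat n v i j =
     (if i \<in> {1..n} \<and> j \<in> {1..n} then
        (if i \<noteq> v \<and> j = v then 1 else if i = v \<and> j \<noteq> v then -1 else 0)
      else 0)"

definition is_isolation :: "nat \<Rightarrow> (nat \<Rightarrow> nat \<Rightarrow> int) \<Rightarrow> nat \<Rightarrow> (nat \<Rightarrow> nat \<Rightarrow> int) \<Rightarrow> bool" where
  "is_isolation n M v N \<longleftrightarrow>
     (\<exists>a :: nat \<Rightarrow> int. \<forall>i j. N i j =
        (if i \<in> {1..n} \<and> j \<in> {1..n}
         then (M i j + (\<Sum>u\<in>{1..n}. a u * X_mat n u i j)) mod 3 else 0)) \<and>
     (\<forall>i\<in>{1..n}. N v i = 0 \<and> N i v = 0)"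

definition isolation :: "nat \<Rightarrow> (nat \<Rightarrow> nat \<Rightarrow> int) \<Rightarrow> nat \<Rightarrow> nat \<Rightarrow> nat \<Rightarrow> int" where
  "isolation n M v = (THE N. is_isolation n M v N)"

definition underlying_adj :: "nat \<Rightarrow> (nat \<Rightarrow> nat \<Rightarrow> int) \<Rightarrow> nat \<Rightarrow> nat \<Rightarrow> bool" where
  "underlying_adj n N i j \<longleftrightarrow> i \<in> {1..n} \<and> j \<in> {1..n} \<and> i \<noteq> j \<and> N i j mod 3 \<noteq> 0"

definition graph_iso_by :: "nat \<Rightarrow> (nat \<Rightarrow> nat) \<Rightarrow> (nat \<Rightarrow> nat \<Rightarrow> bool) \<Rightarrow> (nat \<Rightarrow> nat \<Rightarrow> bool) \<Rightarrow> bool" where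
  "graph_iso_by n \<sigma> G H \<longleftrightarrow> bij_betw \<sigma> {1..n} {1..n} \<and>
     (\<forall>i\<in>{1..n}. \<forall>j\<in>{1..n}. G i j \<longleftrightarrow> H (\<sigma> i) (\<sigma> j))"

end

theory Submission
  imports Defs
begin

lemma img_sub_inj:
  assumes "inj_on s A" "F \<subseteq> A" "G \<subseteq> A" "s ` F \<subseteq> s ` G"
  shows "F \<subseteq> G"
  using assms unfolding inj_on_def by blast

lemma preimg_ex:
  assumes "bij_betw s A B" "G' \<subseteq> B"
  shows "\<exists>G. G \<subseteq> A \<and> s ` G = G'"
proof -
  have "s ` A = B" using assms(1) by (simp add: bij_betw_def)
  then have "s ` (A \<inter> s -` G') = G'" using assms(2) by auto
  then show ?thesis by (intro exI[of _ "A \<inter> s -` G'"]) auto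
qed

lemma exists_facet:
  assumes "finite D" "F \<in> D"
  shows "\<exists>G\<in>facets D. F \<subseteq> G"
proof -
  obtain m where "m \<in> D" "F \<le> m" "\<forall>b\<in>D. m \<le> b \<longrightarrow> m = b"
    using finite_has_maximal2[OF assms] by blast
  then show ?thesis unfolding facets_def by auto
qed

lemma facets_sub: "facets D \<subseteq> D" unfolding facets_def by auto

lemma lemA:
  assumes bij: "bij_betw s A B" and D: "D \<subseteq> Pow A" and D': "D' \<subseteq> Pow B"
    and eq: "\<forall>F. F \<subseteq> A \<longrightarrow> (F \<in> D \<longleftrightarrow> s ` F \<in> D')"
  shows "bij_betw (image s) (facets D) (facets D')"
proof -
  have inj: "inj_on s A" using bij by (simp add: bij_betw_def)
  have fsub: "facets D \<subseteq> Pow A" using facets_sub[of D] D by (rule subset_trans)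
  have i1: "inj_on (image s) (facets D)"
    using inj_on_image_Pow[OF inj] fsub by (rule inj_on_subset)
  have s1: "image s ` facets D \<subseteq> facets D'"
  proof
    fix X assume "X \<in> image s ` facets D"
    then obtain F where F: "F \<in> facets D" and XF: "X = s ` F" by (rule imageE)
    have FD: "F \<in> D" using F facets_sub by (rule subsetD[rotated])
    have FA: "F \<subseteq> A" using FD D by auto
    have XD: "X \<in> D'" using eq[rule_format, OF FA] FD XF by simp
    show "X \<in> facets D'" unfolding facets_def
    proof (intro CollectI conjI ballI impI XD)
      fix G' assume G': "G' \<in> D'" "X \<subseteq> G'"
      have G'B: "G' \<subseteq> B" using G' D' by auto
      then obtain G where G: "G \<subseteq> A" "s ` G = G'" using preimg_ex[OF bij G'B] by auto
      have GD: "G \<in> D" using eq[rule_format, OF G(1)] G(2) G'(1) by simp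
      have "F \<subseteq> G" using img_sub_inj[OF inj FA G(1)] G(2) G'(2) XF by simp
      then have "G = F" using F GD unfolding facets_def by auto
      then show "G' = X" using G(2) XF by simp
    qed
  qed
  have s2: "facets D' \<subseteq> image s ` facets D"
  proof
    fix G' assume G': "G' \<in> facets D'"
    have G'D: "G' \<in> D'" using G' facets_sub by (rule subsetD[rotated])
    have G'B: "G' \<subseteq> B" using G'D D' by auto
    then obtain G where G: "G \<subseteq> A" "s ` G = G'" using preimg_ex[OF bij G'B] by auto
    have GD: "G \<in> D" using eq[rule_format, OF G(1)] G(2) G'D by simp
    have "G \<in> facets D" unfolding facets_def
    proof (intro CollectI conjI ballI impI GD)
      fix H assume H: "H \<in> D" "G \<subseteq> H"
      have HA: "H \<subseteq> A" using H D by auto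
      have HD': "s ` H \<in> D'" using eq[rule_format, OF HA] H(1) by simp
      have "G' \<subseteq> s ` H" using G(2) H(2) by auto
      then have "s ` H = G'" using G' HD' unfolding facets_def by auto
      then have "H \<subseteq> G" using img_sub_inj[OF inj HA G(1)] G(2) by simp
      then show "H = G" using H(2) by (rule antisym)
    qed
    then show "G' \<in> image s ` facets D" using G(2) by auto
  qed
  show ?thesis unfolding bij_betw_def using i1 s1 s2 by auto
qed

lemma lemB:
  assumes bij: "bij_betw s A B" and fin: "finite A" "finite B"
    and D: "D \<subseteq> Pow A" and D': "D' \<subseteq> Pow B"
    and dc: "\<And>F G. F \<in> D \<Longrightarrow> G \<subseteq> F \<Longrightarrow> G \<in> D"
    and dc': "\<And>F G. F \<in> D' \<Longrightarrow> G \<subseteq> F \<Longrightarrow> G \<in> D'"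
    and fb: "bij_betw (image s) (facets D) (facets D')"
  shows "\<forall>F. F \<subseteq> A \<longrightarrow> (F \<in> D \<longleftrightarrow> s ` F \<in> D')"
proof (intro allI impI iffI)
  have inj: "inj_on s A" using bij by (simp add: bij_betw_def)
  have fD: "finite D" using finite_Pow_iff[THEN iffD2, OF fin(1)] D by (rule finite_subset[rotated])
  have fD': "finite D'" using finite_Pow_iff[THEN iffD2, OF fin(2)] D' by (rule finite_subset[rotated])
  have im: "image s ` facets D = facets D'" using fb by (simp add: bij_betw_def)
  fix F assume FA: "F \<subseteq> A"
  { assume "F \<in> D"
    then obtain G where G: "G \<in> facets D" "F \<subseteq> G" using exists_facet[OF fD] by auto
    have "s ` G \<in> facets D'" using im G(1) by auto
    then have "s ` G \<in> D'" using facets_sub by auto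
    moreover have "s ` F \<subseteq> s ` G" using G(2) by auto
    ultimately show "s ` F \<in> D'" by (rule dc') }
  { assume "s ` F \<in> D'"
    then obtain G' where G': "G' \<in> facets D'" "s ` F \<subseteq> G'" using exists_facet[OF fD' \<open>s ` F \<in> D'\<close>] by auto
    have "G' \<in> image s ` facets D" using im G'(1) by simp
    then obtain G where G: "G \<in> facets D" "G' = s ` G" by auto
    have GD: "G \<in> D" using G(1) facets_sub by auto
    have GA: "G \<subseteq> A" using GD D by auto
    have "F \<subseteq> G" using img_sub_inj[OF inj FA GA] G(2) G'(2) by simp
    with GD show "F \<in> D" by (rule dc) }
qed

lemma zeta_facts:
  fixes z :: "'k::field"
  assumes "primitive_cube_root z"
  shows "z^3 = 1" "z \<noteq> 1" "z^2 \<noteq> 1" "z \<noteq> z^2" "z^2 + z + 1 = 0"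
proof -
  show z3: "z^3 = 1" and z1: "z \<noteq> 1" using assms by (auto simp: primitive_cube_root_def)
  have "(z - 1) * (z^2 + z + 1) = z^3 - 1" by (simp add: algebra_simps power3_eq_cube power2_eq_square)
  then have "(z - 1) * (z^2 + z + 1) = 0" using z3 by simp
  then show "z^2 + z + 1 = 0" using z1 by simp
  show "z^2 \<noteq> 1"
  proof
    assume "z^2 = 1"
    then have "z^3 = z" by (simp add: power3_eq_cube power2_eq_square)
    then show False using z3 z1 by simp
  qed
  show "z \<noteq> z^2"
  proof
    assume h: "z = z^2"
    then have "z^3 = z^2" by (metis power2_eq_square power3_eq_cube)
    then show False using z3 z1 h by simp
  qed
qed

lemma cube_cases:
  fixes z x :: "'k::field"
  assumes "primitive_cube_root z" "x^3 = 1"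
  shows "x = 1 \<or> x = z \<or> x = z^2"
proof -
  have e: "(x-1)*(x-z)*(x-z^2) = x^3 - 1 - (z^2+z+1)*x^2 + z*(z^2+z+1)*x - (z^3 - 1)"
    by (simp add: algebra_simps power3_eq_cube power2_eq_square)
  have "(x-1)*(x-z)*(x-z^2) = 0" unfolding e using zeta_facts[OF assms(1)] assms(2) by simp
  then show ?thesis by auto
qed

lemma zeta_pow1:
  fixes z :: "'k::field"
  assumes "primitive_cube_root z"
  shows "z ^ k = 1 \<longleftrightarrow> k mod 3 = 0"
proof -
  have "z ^ k = z ^ (3 * (k div 3) + k mod 3)" by simp
  also have "\<dots> = (z^3) ^ (k div 3) * z ^ (k mod 3)" by (simp only: power_add power_mult)
  also have "\<dots> = z ^ (k mod 3)" using zeta_facts[OF assms] by simp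
  finally have e: "z ^ k = z ^ (k mod 3)" .
  have "k mod 3 = 0 \<or> k mod 3 = 1 \<or> k mod 3 = 2" by auto
  then show ?thesis unfolding e using zeta_facts[OF assms] by auto
qed

lemma E_char:
  fixes z :: "'k::field"
  assumes zp: "primitive_cube_root z" and P: "cube_root_param n w"
    and ij: "i \<in> {1..n}" "j \<in> {1..n}"
  shows "E_matrix n z w i j \<in> {0,1,2} \<and> w i j = z ^ nat (E_matrix n z w i j)"
proof -
  have c: "(w i j)^3 = 1" using P ij by (simp add: cube_root_param_def)
  have ex: "\<exists>m::int. m \<in> {0,1,2} \<and> w i j = z ^ nat m"
    using cube_cases[OF zp c]
    by (metis insertCI nat_numeral nat_one_as_int power_0 power_one_right nat_zero_as_int)
  have un: "\<And>m m'. m \<in> {0,1,2} \<and> w i j = z ^ nat m \<Longrightarrow> m' \<in> {0,1,2} \<and> w i j = z ^ nat m' \<Longrightarrow> m = m'"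
    using zeta_facts[OF zp] by auto
  have "\<exists>!m::int. m \<in> {0,1,2} \<and> w i j = z ^ nat m" using ex un by blast
  from theI'[OF this] show ?thesis using ij by (simp add: E_matrix_def)
qed

lemma nat_int_mod:
  assumes "int k = x"
  shows "k mod 3 = 0 \<longleftrightarrow> x mod 3 = 0"
proof -
  have "x mod 3 = int (k mod 3)" using assms[symmetric] by (simp add: of_nat_mod)
  then show ?thesis by simp
qed

lemma nat3:
  assumes "(a::int) \<in> {0,1,2}" "(b::int) \<in> {0,1,2}" "(c::int) \<in> {0,1,2}"
  shows "(nat a + nat b + nat c) mod 3 = 0 \<longleftrightarrow> (a + b + c) mod 3 = 0"
proof -
  have "int (nat a + nat b + nat c) = a + b + c" using assms by auto
  then show ?thesis by (rule nat_int_mod)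
qed

lemma nat2:
  assumes "(a::int) \<in> {0,1,2}" "(b::int) \<in> {0,1,2}"
  shows "(nat a + nat b) mod 3 = 0 \<longleftrightarrow> (a + b) mod 3 = 0"
proof -
  have "int (nat a + nat b) = a + b" using assms by auto
  then show ?thesis by (rule nat_int_mod)
qed

lemma E_props:
  fixes z :: "'k::field"
  assumes zp: "primitive_cube_root z" and P: "cube_root_param n w"
  shows "\<forall>i\<in>{1..n}. E_matrix n z w i i mod 3 = 0"
    and "\<forall>i\<in>{1..n}. \<forall>j\<in>{1..n}. (E_matrix n z w i j + E_matrix n z w j i) mod 3 = 0"
    and "\<forall>i\<in>{1..n}. \<forall>j\<in>{1..n}. \<forall>h\<in>{1..n}. 
          (w i j * w j h * w h i = 1 \<longleftrightarrow> (E_matrix n z w i j + E_matrix n z w j h + E_matrix n z w h i) mod 3 = 0)"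
proof -
  let ?E = "E_matrix n z w"
  show "\<forall>i\<in>{1..n}. ?E i i mod 3 = 0"
  proof
    fix i assume i: "i \<in> {1..n}"
    have "w i i = 1" using P i by (simp add: cube_root_param_def)
    then have "z ^ nat (?E i i) = 1" using E_char[OF zp P i i] by simp
    then have "nat (?E i i) mod 3 = 0" by (simp add: zeta_pow1[OF zp])
    then show "?E i i mod 3 = 0" using E_char[OF zp P i i] by auto
  qed
  show "\<forall>i\<in>{1..n}. \<forall>j\<in>{1..n}. (?E i j + ?E j i) mod 3 = 0"
  proof (intro ballI)
    fix i j assume i: "i \<in> {1..n}" and j: "j \<in> {1..n}"
    have "w i j * w j i = 1" using P i j by (simp add: cube_root_param_def)
    then have "z ^ (nat (?E i j) + nat (?E j i)) = 1"
      using E_char[OF zp P i j] E_char[OF zp P j i] by (simp add: power_add)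
    then have "(nat (?E i j) + nat (?E j i)) mod 3 = 0" by (simp add: zeta_pow1[OF zp])
    then show "(?E i j + ?E j i) mod 3 = 0"
      using nat2[OF conjunct1[OF E_char[OF zp P i j]] conjunct1[OF E_char[OF zp P j i]]] by simp
  qed
  show "\<forall>i\<in>{1..n}. \<forall>j\<in>{1..n}. \<forall>h\<in>{1..n}. 
          (w i j * w j h * w h i = 1 \<longleftrightarrow> (?E i j + ?E j h + ?E h i) mod 3 = 0)"
  proof (intro ballI)
    fix i j h assume i: "i \<in> {1..n}" and j: "j \<in> {1..n}" and h: "h \<in> {1..n}"
    have eq: "w i j * w j h * w h i = z ^ (nat (?E i j) + nat (?E j h) + nat (?E h i))"
      using E_char[OF zp P i j] E_char[OF zp P j h] E_char[OF zp P h i] by (simp add: power_add)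
    show "(w i j * w j h * w h i = 1 \<longleftrightarrow> (?E i j + ?E j h + ?E h i) mod 3 = 0)"
      unfolding eq zeta_pow1[OF zp]
      by (rule nat3[OF conjunct1[OF E_char[OF zp P i j]] conjunct1[OF E_char[OF zp P j h]] conjunct1[OF E_char[OF zp P h i]]])
  qed
qed

lemma X_sum:
  assumes i: "i \<in> {1..n}" and j: "j \<in> {1..n}"
  shows "(\<Sum>u\<in>{1..n}. a u * X_mat n u i j) = (if i = j then 0 else a j - a i)"
proof (cases "i = j")
  case True
  then have "\<And>u. X_mat n u i j = 0" by (auto simp: X_mat_def)
  then show ?thesis using True by simp
next
  case False
  have "\<And>u. a u * X_mat n u i j = (if u = j then a u else 0) - (if u = i then a u else 0)"
    using i j False by (auto simp: X_mat_def)
  then have "(\<Sum>u\<in>{1..n}. a u * X_mat n u i j)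
      = (\<Sum>u\<in>{1..n}. (if u = j then a u else 0)) - (\<Sum>u\<in>{1..n}. (if u = i then a u else 0))"
    by (simp add: sum_subtractf)
  also have "\<dots> = a j - a i" using i j by (simp add: sum.delta')
  finally show ?thesis using False by simp
qed

lemma iso_formula:
  assumes diag: "\<forall>i\<in>{1..n}. M i i mod 3 = 0"
    and skew: "\<forall>i\<in>{1..n}. \<forall>j\<in>{1..n}. (M i j + M j i) mod 3 = 0"
    and v: "v \<in> {1..n}"
  shows "\<forall>i\<in>{1..n}. \<forall>j\<in>{1..n}. isolation n M v i j = (M i j + M v i - M v j) mod 3"
proof -
  define N0 where "N0 = (\<lambda>i j. if i \<in> {1..n} \<and> j \<in> {1..n} then (M i j + M v i - M v j) mod 3 else (0::int))"
  have vv: "M v v mod 3 = 0" using diag v by blast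
  have uniq: "N = N0" if N: "is_isolation n M v N" for N
  proof -
    obtain a where a: "\<And>i j. N i j =
        (if i \<in> {1..n} \<and> j \<in> {1..n}
         then (M i j + (\<Sum>u\<in>{1..n}. a u * X_mat n u i j)) mod 3 else 0)"
      and z: "\<forall>i\<in>{1..n}. N v i = 0 \<and> N i v = 0"
      using N unfolding is_isolation_def by blast
    have a2: "N i j = (M i j + (if i = j then 0 else a j - a i)) mod 3"
      if "i \<in> {1..n}" "j \<in> {1..n}" for i j
      using a[of i j] X_sum[OF that, of a] that by simp
    have rowv: "(M v j + a j - a v) mod 3 = 0" if "j \<in> {1..n}" "j \<noteq> v" for j
    proof -
      have "N v j = 0" using z that by blast
      then have "(M v j + (a j - a v)) mod 3 = 0" using a2[OF v that(1)] that by simp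
      then show ?thesis by (simp add: add_diff_eq)
    qed
    show "N = N0"
    proof (intro ext)
      fix i j
      show "N i j = N0 i j"
      proof (cases "i \<in> {1..n} \<and> j \<in> {1..n}")
        case False
        then show ?thesis unfolding N0_def a[of i j] by (simp only: if_not_P[OF False] if_False)
      next
        case True
        then have i: "i \<in> {1..n}" and j: "j \<in> {1..n}" by auto
        have N0ij: "N0 i j = (M i j + M v i - M v j) mod 3" using i j by (simp add: N0_def add_diff_eq)
        show ?thesis
        proof (cases "i = j")
          case True
          then show ?thesis using a2[OF i j] N0ij by simp
        next
          case ij: False
          show ?thesis
          proof (cases "i = v")
            case True
            then show ?thesis using z j N0ij vv by simp
          next
            case iv: False
            show ?thesis
            proof (cases "j = v")
              case True
              have s: "(M i v + M v i) mod 3 = 0" using skew i v by blast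
              have "(M i v + M v i - M v v) mod 3 = 0" using s vv by presburger
              then have "N0 i j = 0" using N0ij True by simp
              then show ?thesis using z i True by simp
            next
              case jv: False
              have r1: "(M v j + a j - a v) mod 3 = 0" using rowv[OF j jv] .
              have r2: "(M v i + a i - a v) mod 3 = 0" using rowv[OF i iv] .
              have "N i j = (M i j + (a j - a i)) mod 3" using a2[OF i j] ij by simp
              also have "\<dots> = (M i j + M v i - M v j) mod 3" using r1 r2 by presburger
              finally show ?thesis using N0ij by simp
            qed
          qed
        qed
      qed
    qed
  qed
  have ex: "is_isolation n M v N0"
    unfolding is_isolation_def
  proof (intro conjI exI[of _ "\<lambda>u. - M v u"] allI ballI)
    fix i j
    show "N0 i j = (if i \<in> {1..n} \<and> j \<in> {1..n}
         then (M i j + (\<Sum>u\<in>{1..n}. (- M v u) * X_mat n u i j)) mod 3 else 0)"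
    proof (cases "i \<in> {1..n} \<and> j \<in> {1..n}")
      case True
      then have i: "i \<in> {1..n}" and j: "j \<in> {1..n}" by auto
      show ?thesis using X_sum[OF i j, of "\<lambda>u. - M v u"] i j by (simp add: N0_def add_diff_eq)
    next
      case False
      show ?thesis unfolding N0_def by (simp only: if_not_P[OF False] if_False)
    qed
  next
    fix i assume i: "i \<in> {1..n}"
    show "N0 v i = 0" using i v vv by (simp add: N0_def)
    have s: "(M i v + M v i) mod 3 = 0" using skew i v by blast
    show "N0 i v = 0" using i v vv s by (simp add: N0_def) presburger
  qed
  have "isolation n M v = N0" unfolding isolation_def
    using ex uniq by (rule the_equality)
  then show ?thesis by (simp add: N0_def)
qed

definition tri :: "(nat \<Rightarrow> nat \<Rightarrow> 'k::field) \<Rightarrow> nat \<Rightarrow> nat \<Rightarrow> nat \<Rightarrow> 'k" where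
  "tri w i j h = w i j * w j h * w h i"

lemma param_facts:
  assumes "cube_root_param n w"
  shows "\<And>i. i \<in> {1..n} \<Longrightarrow> w i i = 1"
    and "\<And>i j. i \<in> {1..n} \<Longrightarrow> j \<in> {1..n} \<Longrightarrow> w i j * w j i = 1"
  using assms by (auto simp: cube_root_param_def)

lemma tri_deg:
  assumes P: "cube_root_param n w" and "a \<in> {1..n}" "c \<in> {1..n}"
  shows "tri w a a c = 1" "tri w a c c = 1" "tri w a c a = 1"
  using param_facts[OF P] assms(2,3) by (simp_all add: tri_def)

lemma tri_cyc: "tri w a b c = tri w b c a"
  by (simp add: tri_def mult_ac)

lemma tri_swap:
  assumes P: "cube_root_param n w" and "a \<in> {1..n}" "b \<in> {1..n}" "c \<in> {1..n}"
  shows "tri w a b c = 1 \<longleftrightarrow> tri w b a c = 1"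
proof -
  have "tri w a b c * tri w b a c = (w a b * w b a) * (w b c * w c b) * (w c a * w a c)"
    by (simp add: tri_def mult_ac)
  also have "\<dots> = 1" using param_facts(2)[OF P] assms(2-4) by simp
  finally have e: "tri w a b c * tri w b a c = 1" .
  show ?thesis
  proof
    assume "tri w a b c = 1" then show "tri w b a c = 1" using e by simp
  next
    assume "tri w b a c = 1" then show "tri w a b c = 1" using e by simp
  qed
qed

lemma faces_iff:
  assumes P: "cube_root_param n w"
  shows "F \<in> point_faces n w \<longleftrightarrow> F \<subseteq> {1..n} \<and> (\<forall>i\<in>F. \<forall>j\<in>F. \<forall>h\<in>F. tri w i j h = 1)"
proof
  assume F: "F \<in> point_faces n w"
  have FA: "F \<subseteq> {1..n}" using F by (simp add: point_faces_def)
  have "tri w i j h = 1" if "i \<in> F" "j \<in> F" "h \<in> F" for i j h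
  proof -
    have ia: "i \<in> {1..n}" "j \<in> {1..n}" "h \<in> {1..n}" using that FA by auto
    show ?thesis
    proof (cases "i = j")
      case True then show ?thesis using tri_deg(1)[OF P ia(2) ia(3)] by simp
    next
      case ij: False
      show ?thesis
      proof (cases "j = h")
        case True then show ?thesis using tri_deg(2)[OF P ia(1) ia(3)] by simp
      next
        case jh: False
        show ?thesis
        proof (cases "i = h")
          case True then show ?thesis using tri_deg(3)[OF P ia(1) ia(2)] by simp
        next
          case False
          then show ?thesis using F that ij jh unfolding point_faces_def tri_def by blast
        qed
      qed
    qed
  qed
  then show "F \<subseteq> {1..n} \<and> (\<forall>i\<in>F. \<forall>j\<in>F. \<forall>h\<in>F. tri w i j h = 1)" using FA by blast
next
  assume "F \<subseteq> {1..n} \<and> (\<forall>i\<in>F. \<forall>j\<in>F. \<forall>h\<in>F. tri w i j h = 1)"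
  then show "F \<in> point_faces n w" unfolding point_faces_def tri_def by blast
qed

lemma triple_face:
  assumes P: "cube_root_param n w" and A: "i \<in> {1..n}" "j \<in> {1..n}" "h \<in> {1..n}"
  shows "{i,j,h} \<in> point_faces n w \<longleftrightarrow> tri w i j h = 1"
proof
  assume "{i,j,h} \<in> point_faces n w"
  then have "{i,j,h} \<subseteq> {1..n} \<and> (\<forall>a\<in>{i,j,h}. \<forall>b\<in>{i,j,h}. \<forall>c\<in>{i,j,h}. tri w a b c = 1)"
    by (rule iffD1[OF faces_iff[OF P]])
  then show "tri w i j h = 1" by simp
next
  assume t: "tri w i j h = 1"
  have t2a: "tri w j h i = 1" using t tri_cyc[of w i j h] by simp
  have t2b: "tri w h i j = 1" using t2a tri_cyc[of w j h i] by simp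
  have t3: "tri w j i h = 1" "tri w i h j = 1" "tri w h j i = 1"
    using tri_swap[OF P A(1) A(2) A(3)] tri_swap[OF P A(3) A(1) A(2)]
      tri_swap[OF P A(2) A(3) A(1)] t t2a t2b by simp_all
  have sub: "{i,j,h} \<subseteq> {1..n}" using A by simp
  have all: "\<forall>x\<in>{i,j,h}. \<forall>y\<in>{i,j,h}. \<forall>z\<in>{i,j,h}. tri w x y z = 1"
    using t t2a t2b t3 tri_deg[OF P] A by auto
  show "{i,j,h} \<in> point_faces n w" using sub all by (intro iffD2[OF faces_iff[OF P]] conjI)
qed

lemma adj_char:
  fixes z :: "'k::field"
  assumes zp: "primitive_cube_root z" and P: "cube_root_param n w"
    and i: "i \<in> {1..n}" and j: "j \<in> {1..n}" and v: "v \<in> {1..n}"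
  shows "underlying_adj n (isolation n (E_matrix n z w) v) i j \<longleftrightarrow> i \<noteq> j \<and> tri w i j v \<noteq> 1"
proof -
  let ?E = "E_matrix n z w"
  have iso: "isolation n ?E v i j = (?E i j + ?E v i - ?E v j) mod 3"
    using iso_formula[OF E_props(1)[OF zp P] E_props(2)[OF zp P] v, rule_format, OF i j] .
  have sk: "(?E j v + ?E v j) mod 3 = 0" using E_props(2)[OF zp P, rule_format, OF j v] .
  have tr: "tri w i j v = 1 \<longleftrightarrow> (?E i j + ?E j v + ?E v i) mod 3 = 0"
    using E_props(3)[OF zp P, rule_format, OF i j v] unfolding tri_def .
  have "(?E i j + ?E v i - ?E v j) mod 3 = 0 \<longleftrightarrow> (?E i j + ?E j v + ?E v i) mod 3 = 0"
    using sk by presburger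
  then show ?thesis unfolding underlying_adj_def iso using tr i j by simp
qed

theorem proposition5p4:
  fixes \<zeta> :: "'k::field_char_0"
    and n :: nat
    and \<omega> \<omega>' :: "nat \<Rightarrow> nat \<Rightarrow> 'k"
  assumes "alg_closed_field TYPE('k)"
    and "primitive_cube_root \<zeta>"
    and "cube_root_param n \<omega>"
    and "cube_root_param n \<omega>'"
  shows "simplicial_iso n (point_faces n \<omega>) (point_faces n \<omega>') \<longleftrightarrow>
    (\<exists>\<sigma>. bij_betw \<sigma> {1..n} {1..n} \<and>
       (\<forall>v\<in>{1..n}. graph_iso_by n \<sigma>
          (underlying_adj n (isolation n (E_matrix n \<zeta> \<omega>) v))
          (underlying_adj n (isolation n (E_matrix n \<zeta> \<omega>') (\<sigma> v)))))"
proof -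
  note zp = assms(2) and P = assms(3) and P' = assms(4)
  let ?A = "{1..n}"
  let ?D = "point_faces n \<omega>"
  let ?D' = "point_faces n \<omega>'"
  let ?G = "\<lambda>v. underlying_adj n (isolation n (E_matrix n \<zeta> \<omega>) v)"
  let ?H = "\<lambda>v. underlying_adj n (isolation n (E_matrix n \<zeta> \<omega>') v)"
  let ?T = "\<lambda>\<sigma>. \<forall>i\<in>?A. \<forall>j\<in>?A. \<forall>h\<in>?A. (tri \<omega> i j h = 1 \<longleftrightarrow> tri \<omega>' (\<sigma> i) (\<sigma> j) (\<sigma> h) = 1)"
  have DA: "?D \<subseteq> Pow ?A" by (auto simp: point_faces_def)
  have DA': "?D' \<subseteq> Pow ?A" by (auto simp: point_faces_def)
  have dc: "G \<in> ?D" if "F \<in> ?D" "G \<subseteq> F" for F G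
    using that unfolding point_faces_def by blast
  have dc': "G \<in> ?D'" if "F \<in> ?D'" "G \<subseteq> F" for F G
    using that unfolding point_faces_def by blast
  have key1: "(\<forall>F. F \<subseteq> ?A \<longrightarrow> (F \<in> ?D \<longleftrightarrow> \<sigma> ` F \<in> ?D')) \<longleftrightarrow> ?T \<sigma>"
    if bij: "bij_betw \<sigma> ?A ?A" for \<sigma>
  proof
    have sA: "\<And>i. i \<in> ?A \<Longrightarrow> \<sigma> i \<in> ?A" using bij bij_betwE by blast
    assume H: "\<forall>F. F \<subseteq> ?A \<longrightarrow> (F \<in> ?D \<longleftrightarrow> \<sigma> ` F \<in> ?D')"
    show "?T \<sigma>"
    proof (intro ballI)
      fix i j h assume i: "i \<in> ?A" and j: "j \<in> ?A" and h: "h \<in> ?A"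
      have sub: "{i,j,h} \<subseteq> ?A" using i j h by simp
      have "{i,j,h} \<in> ?D \<longleftrightarrow> \<sigma> ` {i,j,h} \<in> ?D'" using H[rule_format, OF sub] .
      moreover have "\<sigma> ` {i,j,h} = {\<sigma> i, \<sigma> j, \<sigma> h}" by simp
      ultimately show "tri \<omega> i j h = 1 \<longleftrightarrow> tri \<omega>' (\<sigma> i) (\<sigma> j) (\<sigma> h) = 1"
        using triple_face[OF P i j h] triple_face[OF P' sA[OF i] sA[OF j] sA[OF h]] by simp
    qed
  next
    have sA: "\<And>i. i \<in> ?A \<Longrightarrow> \<sigma> i \<in> ?A" using bij bij_betwE by blast
    assume T: "?T \<sigma>"
    show "\<forall>F. F \<subseteq> ?A \<longrightarrow> (F \<in> ?D \<longleftrightarrow> \<sigma> ` F \<in> ?D')"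
    proof (intro allI impI)
      fix F assume F: "F \<subseteq> ?A"
      have sF: "\<sigma> ` F \<subseteq> ?A" using F sA by blast
      have e1: "F \<in> ?D \<longleftrightarrow> (\<forall>i\<in>F. \<forall>j\<in>F. \<forall>h\<in>F. tri \<omega> i j h = 1)"
        using faces_iff[OF P, of F] F by simp
      have e2: "\<sigma> ` F \<in> ?D' \<longleftrightarrow> (\<forall>x\<in>\<sigma> ` F. \<forall>y\<in>\<sigma> ` F. \<forall>z\<in>\<sigma> ` F. tri \<omega>' x y z = 1)"
        using faces_iff[OF P', of "\<sigma> ` F"] sF by simp
      have e3: "(\<forall>x\<in>\<sigma> ` F. \<forall>y\<in>\<sigma> ` F. \<forall>z\<in>\<sigma> ` F. tri \<omega>' x y z = 1)
          \<longleftrightarrow> (\<forall>i\<in>F. \<forall>j\<in>F. \<forall>h\<in>F. tri \<omega>' (\<sigma> i) (\<sigma> j) (\<sigma> h) = 1)"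
        by simp
      have pw: "tri \<omega> i j h = 1 \<longleftrightarrow> tri \<omega>' (\<sigma> i) (\<sigma> j) (\<sigma> h) = 1"
        if "i \<in> F" "j \<in> F" "h \<in> F" for i j h
        using T[rule_format, OF subsetD[OF F that(1)] subsetD[OF F that(2)] subsetD[OF F that(3)]] .
      have e4: "(\<forall>i\<in>F. \<forall>j\<in>F. \<forall>h\<in>F. tri \<omega> i j h = 1)
          \<longleftrightarrow> (\<forall>i\<in>F. \<forall>j\<in>F. \<forall>h\<in>F. tri \<omega>' (\<sigma> i) (\<sigma> j) (\<sigma> h) = 1)"
        using pw by (simp cong: ball_cong)
      show "F \<in> ?D \<longleftrightarrow> \<sigma> ` F \<in> ?D'" using e1 e2 e3 e4 by simp
    qed
  qed
  have key2: "(\<forall>v\<in>?A. graph_iso_by n \<sigma> (?G v) (?H (\<sigma> v))) \<longleftrightarrow> ?T \<sigma>"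
    if bij: "bij_betw \<sigma> ?A ?A" for \<sigma>
  proof -
    have sA: "\<And>i. i \<in> ?A \<Longrightarrow> \<sigma> i \<in> ?A" using bij bij_betwE by blast
    have inj: "inj_on \<sigma> ?A" using bij by (simp add: bij_betw_def)
    have pt: "(?G v i j \<longleftrightarrow> ?H (\<sigma> v) (\<sigma> i) (\<sigma> j)) \<longleftrightarrow>
        (tri \<omega> i j v = 1 \<longleftrightarrow> tri \<omega>' (\<sigma> i) (\<sigma> j) (\<sigma> v) = 1)"
      if i: "i \<in> ?A" and j: "j \<in> ?A" and v: "v \<in> ?A" for i j v
    proof -
      have g: "?G v i j \<longleftrightarrow> i \<noteq> j \<and> tri \<omega> i j v \<noteq> 1" by (rule adj_char[OF zp P i j v])
      have h: "?H (\<sigma> v) (\<sigma> i) (\<sigma> j) \<longleftrightarrow> \<sigma> i \<noteq> \<sigma> j \<and> tri \<omega>' (\<sigma> i) (\<sigma> j) (\<sigma> v) \<noteq> 1"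
        by (rule adj_char[OF zp P' sA[OF i] sA[OF j] sA[OF v]])
      show ?thesis
      proof (cases "i = j")
        case True
        then show ?thesis using g h tri_deg(1)[OF P j v] tri_deg(1)[OF P' sA[OF j] sA[OF v]] by simp
      next
        case False
        then have "\<sigma> i \<noteq> \<sigma> j" using inj i j by (meson inj_on_contraD)
        then show ?thesis using g h False by blast
      qed
    qed
    have "(\<forall>v\<in>?A. graph_iso_by n \<sigma> (?G v) (?H (\<sigma> v))) \<longleftrightarrow>
        (\<forall>v\<in>?A. \<forall>i\<in>?A. \<forall>j\<in>?A. (?G v i j \<longleftrightarrow> ?H (\<sigma> v) (\<sigma> i) (\<sigma> j)))"
      using bij by (simp add: graph_iso_by_def)
    also have "\<dots> \<longleftrightarrow> (\<forall>v\<in>?A. \<forall>i\<in>?A. \<forall>j\<in>?A. (tri \<omega> i j v = 1 \<longleftrightarrow> tri \<omega>' (\<sigma> i) (\<sigma> j) (\<sigma> v) = 1))"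
      apply (intro ball_cong[OF refl])
      apply (rule pt)
        apply assumption+
      done
    also have "\<dots> \<longleftrightarrow> ?T \<sigma>" by blast
    finally show ?thesis .
  qed
  have fin: "finite ?A" by simp
  show ?thesis
  proof
    assume "simplicial_iso n ?D ?D'"
    then obtain \<sigma> where bij: "bij_betw \<sigma> ?A ?A" and fb: "bij_betw (image \<sigma>) (facets ?D) (facets ?D')"
      unfolding simplicial_iso_def by blast
    have "\<forall>F. F \<subseteq> ?A \<longrightarrow> (F \<in> ?D \<longleftrightarrow> \<sigma> ` F \<in> ?D')"
      by (rule lemB[OF bij fin fin DA DA' dc dc' fb])
    then have "?T \<sigma>" using key1[OF bij] by simp
    then have "\<forall>v\<in>?A. graph_iso_by n \<sigma> (?G v) (?H (\<sigma> v))" using key2[OF bij] by simp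
    then show "\<exists>\<sigma>. bij_betw \<sigma> ?A ?A \<and> (\<forall>v\<in>?A. graph_iso_by n \<sigma> (?G v) (?H (\<sigma> v)))"
      using bij by blast
  next
    assume "\<exists>\<sigma>. bij_betw \<sigma> ?A ?A \<and> (\<forall>v\<in>?A. graph_iso_by n \<sigma> (?G v) (?H (\<sigma> v)))"
    then obtain \<sigma> where bij: "bij_betw \<sigma> ?A ?A" and g: "\<forall>v\<in>?A. graph_iso_by n \<sigma> (?G v) (?H (\<sigma> v))"
      by blast
    have "?T \<sigma>" using g key2[OF bij] by simp
    then have "\<forall>F. F \<subseteq> ?A \<longrightarrow> (F \<in> ?D \<longleftrightarrow> \<sigma> ` F \<in> ?D')" using key1[OF bij] by simp
    then have "bij_betw (image \<sigma>) (facets ?D) (facets ?D')" by (rule lemA[OF bij DA DA'])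
    then show "simplicial_iso n ?D ?D'" unfolding simplicial_iso_def using bij by blast
  qed
qed


end
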